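(* Let $v,\Omega:[0,\infty)\to\mathbb{R}^3$ be continuous, uniformly bounded signals, and let $(R,x)$ solve $\dot x=Rv$, $\dot R=R\Omega_\times$, with $X=\mathcal{T}(R,x)$. Let $X_e=\mathcal{T}(Q,\xi)$ solve $\dot X_e=X_eU^\vee$ with $U^\vee=\begin{pmatrix}\Omega_\times&v\\0&0\end{pmatrix}$ and arbitrary $X_e(0)\in SE(3)$. Let $X_c=\mathcal{T}(Q_c,\xi_c)\in SE(3)$ be the constant matrix with $X_e(t)=X_cX(t)$ for all $t\ge0$, namely $X_c=X_e(0)X(0)^{-1}$. Let $z_1,\dots,z_n\in\mathbb{R}^3$ be constant landmark positions with $z_i\neq x(t)$ for all $t\ge0$ and all $i$. Define $$z_i^v(t):=\xi(t)+Q(t)R(t)^\top\big(z_i-x(t)\big),$$ $$y_i(t):=R(t)^\top\frac{z_i-x(t)}{|z_i-x(t)|},\qquad y_i^v(t):=Q(t)^\top\frac{z_i^v(t)-\xi(t)}{|z_i^v(t)-\xi(t)|}.$$ Then for every $i\in\{1,\dots,n\}$: 1) $z_i^v(t)=\xi_c+Q_cz_i$ for all $t\ge0$; in particular $z_i^v$ is constant. 2) $y_i^v(t)=y_i(t)$ for all $t\ge0$.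
   Context: For $a\in\mathbb{R}^3$, $a_\times$ denotes the skew-symmetric matrix with $a_\times b=a\times b$. We write $$\mathcal{T}(R,x)=\begin{pmatrix}R&x\\0&1\end{pmatrix}\in SE(3),\qquad R\in SO(3),\ x\in\mathbb{R}^3.$$ $|\cdot|$ is the Euclidean norm. *)

theory Defs
  imports "HOL-Analysis.Analysis" "HOL-Analysis.Cross3"
begin

definition skew :: "real^3 \<Rightarrow> real^3^3" where
  "skew a = matrix (\<lambda>b. cross3 a b)"

definition SO3 :: "(real^3^3) set" where
  "SO3 = {R. orthogonal_matrix R \<and> det R = 1}"

definition unitv :: "real^3 \<Rightarrow> real^3" where
  "unitv w = (1 / norm w) *\<^sub>R w"

end

theory Submission imports Defs begin

lemma bil_mm: "bounded_bilinear ((**) :: real^3^3 \<Rightarrow> real^3^3 \<Rightarrow> real^3^3)"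
  unfolding bilinear_conv_bounded_bilinear[symmetric] bilinear_def linear_iff
  by (simp add: vec_eq_iff sum.distrib matrix_matrix_mult_def
      sum_distrib_left algebra_simps)

lemma bil_mv: "bounded_bilinear ((*v) :: real^3^3 \<Rightarrow> real^3 \<Rightarrow> real^3)"
  unfolding bilinear_conv_bounded_bilinear[symmetric] bilinear_def linear_iff
  by (simp add: vec_eq_iff matrix_vector_mult_def
      sum_distrib_left sum.distrib algebra_simps)

lemma bl_tr: "bounded_linear (transpose :: real^3^3 \<Rightarrow> real^3^3)"
  unfolding linear_conv_bounded_linear[symmetric] linear_iff
  by (simp add: vec_eq_iff transpose_def)

lemma skew_tr: "transpose (skew w) = - skew w"
  by (simp add: skew_def matrix_def transpose_def vec_eq_iff forall_3 cross3_simps axis_def)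

lemma orth_norm: "orthogonal_matrix (M::real^3^3) \<Longrightarrow> norm (M *v w) = norm w"
  by (metis orthogonal_transformation_matrix orthogonal_transformation_norm matrix_of_matrix_vector_mul matrix_vector_mul_linear)

theorem lemma2:
  fixes v \<Omega> :: "real \<Rightarrow> real^3"
    and R Q :: "real \<Rightarrow> real^3^3"
    and x \<xi> :: "real \<Rightarrow> real^3"
    and z :: "nat \<Rightarrow> real^3"
    and n :: nat
  assumes v_cont: "continuous_on {0..} v"
    and Om_cont: "continuous_on {0..} \<Omega>"
    and v_bdd: "\<exists>B. \<forall>t\<ge>0. norm (v t) \<le> B"
    and Om_bdd: "\<exists>B. \<forall>t\<ge>0. norm (\<Omega> t) \<le> B"
    and R_SO3: "\<forall>t\<ge>0. R t \<in> SO3"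
    and x_ode: "\<forall>t\<ge>0. (x has_vector_derivative (R t *v v t)) (at t within {0..})"
    and R_ode: "\<forall>t\<ge>0. (R has_vector_derivative (R t ** skew (\<Omega> t))) (at t within {0..})"
    and Q_SO3: "\<forall>t\<ge>0. Q t \<in> SO3"
    and xi_ode: "\<forall>t\<ge>0. (\<xi> has_vector_derivative (Q t *v v t)) (at t within {0..})"
    and Q_ode: "\<forall>t\<ge>0. (Q has_vector_derivative (Q t ** skew (\<Omega> t))) (at t within {0..})"
    and z_ne: "\<forall>i\<in>{1..n}. \<forall>t\<ge>0. z i \<noteq> x t"
  shows "let Qc = Q 0 ** transpose (R 0);
             \<xi>c = \<xi> 0 - Qc *v x 0;
             zv = (\<lambda>i t. \<xi> t + (Q t ** transpose (R t)) *v (z i - x t));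
             y = (\<lambda>i t. transpose (R t) *v unitv (z i - x t));
             yv = (\<lambda>i t. transpose (Q t) *v unitv (zv i t - \<xi> t))
         in \<forall>i\<in>{1..n}. \<forall>t\<ge>0. zv i t = \<xi>c + Qc *v z i \<and> yv i t = y i t"
proof -
  define M where "M = (\<lambda>t. Q t ** transpose (R t))"
  have orth: "orthogonal_matrix (R t)" "orthogonal_matrix (Q t)" if "t \<ge> 0" for t
    using R_SO3 Q_SO3 that by (auto simp: SO3_def)
  have Mder: "(M has_vector_derivative 0) (at t within {0..})" if t: "t \<ge> 0" for t
  proof -
    have d1: "((\<lambda>t. transpose (R t)) has_vector_derivative transpose (R t ** skew (\<Omega> t))) (at t within {0..})"
      using bounded_linear.has_vector_derivative[OF bl_tr R_ode[rule_format, OF t]] .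
    have "(M has_vector_derivative (Q t ** transpose (R t ** skew (\<Omega> t)) + (Q t ** skew (\<Omega> t)) ** transpose (R t))) (at t within {0..})"
      unfolding M_def using bounded_bilinear.has_vector_derivative[OF bil_mm Q_ode[rule_format, OF t] d1] .
    moreover have "Q t ** transpose (R t ** skew (\<Omega> t)) + (Q t ** skew (\<Omega> t)) ** transpose (R t) = 0"
      by (simp add: matrix_transpose_mul skew_tr matrix_mul_assoc bounded_bilinear.minus_right[OF bil_mm] bounded_bilinear.minus_left[OF bil_mm])
    ultimately show ?thesis by simp
  qed
  obtain C where C: "\<And>t. t \<in> {0..} \<Longrightarrow> M t = C"
    using has_vector_derivative_zero_constant[of "{0::real..}" M] Mder by auto
  have MC: "M t = M 0" if "t \<ge> 0" for t using C that by simp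
  define f where "f = (\<lambda>t. \<xi> t - M t *v x t)"
  have fder: "(f has_vector_derivative 0) (at t within {0..})" if t: "t \<ge> 0" for t
  proof -
    have "((\<lambda>t. M t *v x t) has_vector_derivative (M t *v (R t *v v t) + 0 *v x t)) (at t within {0..})"
      using bounded_bilinear.has_vector_derivative[OF bil_mv Mder[OF t] x_ode[rule_format, OF t]] .
    moreover have "M t *v (R t *v v t) = Q t *v v t"
      using orth[OF t] by (simp add: M_def matrix_vector_mul_assoc matrix_mul_assoc[symmetric] orthogonal_matrix_def)
    ultimately have "((\<lambda>t. M t *v x t) has_vector_derivative (Q t *v v t)) (at t within {0..})" by simp
    from has_vector_derivative_diff[OF xi_ode[rule_format, OF t] this] show ?thesis
      by (simp add: f_def)
  qed
  obtain D where D: "\<And>t. t \<in> {0..} \<Longrightarrow> f t = D"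
    using has_vector_derivative_zero_constant[of "{0::real..}" f] fder by auto
  have fC: "f t = f 0" if "t \<ge> 0" for t using D that by simp
  show ?thesis unfolding Let_def
  proof (intro ballI allI impI conjI)
    fix i t assume t: "(t::real) \<ge> 0"
    have "\<xi> t + (Q t ** transpose (R t)) *v (z i - x t) = f t + M t *v z i"
      by (simp add: f_def M_def matrix_vector_right_distrib algebra_simps)
    also have "\<dots> = f 0 + M 0 *v z i" using fC[OF t] MC[OF t] by simp
    finally show "\<xi> t + (Q t ** transpose (R t)) *v (z i - x t) =
       \<xi> 0 - (Q 0 ** transpose (R 0)) *v x 0 + (Q 0 ** transpose (R 0)) *v z i"
      by (simp add: f_def M_def)
    have om: "orthogonal_matrix (M t)" using orth[OF t] by (simp add: M_def orthogonal_matrix_mul)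
    have "unitv (M t *v (z i - x t)) = M t *v unitv (z i - x t)"
      using orth_norm[OF om] by (simp add: unitv_def matrix_vector_mult_scaleR)
    moreover have "transpose (Q t) *v (M t *v w) = transpose (R t) *v w" for w
      using orth[OF t] by (simp add: M_def matrix_vector_mul_assoc matrix_mul_assoc orthogonal_matrix_def)
    ultimately show "transpose (Q t) *v unitv (\<xi> t + (Q t ** transpose (R t)) *v (z i - x t) - \<xi> t) =
       transpose (R t) *v unitv (z i - x t)"
      by (simp add: M_def)
  qed
qed

end
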